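(* Let $(f_n)_{n\ge 1}$ be a sequence of $\{0,1\}$-valued functions on a set $X$. Then the following are equivalent: (i) there are a natural number $N$ and a set $E\subseteq\{1,\ldots,N\}$ such that for all $i_1<\cdots<i_N<\omega$, $$\bigcap_{j\in E}f_{i_j}^{-1}(1)\cap\bigcap_{j\in\{1,\ldots,N\}\setminus E}f_{i_j}^{-1}(0)=\emptyset;$$ (ii) there is a natural number $M$ such that $\sum_{n=1}^\infty|f_n(x)-f_{n+1}(x)|\le M$ for all $x\in X$. Moreover, if $X$ is a compact metric space and each $f_n$ is continuous, then (ii) (equivalently (i)) implies that $(f_n)$ converges pointwise to a function $f$ which is a difference of bounded semi-continuous functions.
   Context: A real-valued function $F$ on a topological space $X$ is upper (resp. lower) semi-continuous if $\{x:F(x)\ge r\}$ (resp. $\{x:F(x)\le r\}$) is closed for every real $r$; it is semi-continuous if it is upper or lower semi-continuous. A function $f$ is a difference of bounded semi-continuous functions (DBSC) if $f=F_1-F_2$ for some bounded semi-continuous functions $F_1,F_2$ on $X$. *)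

theory Defs
  imports "HOL-Analysis.Analysis"
begin

definition usc_on :: "'a topology \<Rightarrow> ('a \<Rightarrow> real) \<Rightarrow> bool" where
  "usc_on T F \<longleftrightarrow> (\<forall>r. closedin T {x \<in> topspace T. F x \<ge> r})"

definition lsc_on :: "'a topology \<Rightarrow> ('a \<Rightarrow> real) \<Rightarrow> bool" where
  "lsc_on T F \<longleftrightarrow> (\<forall>r. closedin T {x \<in> topspace T. F x \<le> r})"

definition semicont_on :: "'a topology \<Rightarrow> ('a \<Rightarrow> real) \<Rightarrow> bool" where
  "semicont_on T F \<longleftrightarrow> usc_on T F \<or> lsc_on T F"

definition bounded_on :: "'a topology \<Rightarrow> ('a \<Rightarrow> real) \<Rightarrow> bool" where
  "bounded_on T F \<longleftrightarrow> (\<exists>B. \<forall>x \<in> topspace T. \<bar>F x\<bar> \<le> B)"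

definition DBSC :: "'a topology \<Rightarrow> ('a \<Rightarrow> real) \<Rightarrow> bool" where
  "DBSC T f \<longleftrightarrow> (\<exists>F1 F2. semicont_on T F1 \<and> semicont_on T F2 \<and>
      bounded_on T F1 \<and> bounded_on T F2 \<and> (\<forall>x \<in> topspace T. f x = F1 x - F2 x))"

end

theory Submission
  imports Defs
begin

lemma find_pos:
  fixes s :: "nat \<Rightarrow> real" and c :: nat
  assumes s01: "\<And>n. s n \<in> {0,1}" and v: "v \<in> {0,1}"
  shows "\<forall>a. b - a \<le> d \<longrightarrow> (\<Sum>n\<in>{a..<b}. \<bar>s n - s (Suc n)\<bar>) \<ge> 2 + real c \<longrightarrow>
     (\<exists>m. a \<le> m \<and> s m = v \<and> (\<Sum>n\<in>{Suc m..<b}. \<bar>s n - s (Suc n)\<bar>) \<ge> real c)"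
proof (induction d)
  case 0
  then show ?case by auto
next
  case (Suc d)
  show ?case
  proof (intro allI impI)
    fix a assume ba: "b - a \<le> Suc d" and S: "(\<Sum>n\<in>{a..<b}. \<bar>s n - s (Suc n)\<bar>) \<ge> 2 + real c"
    have t1: "\<And>n. \<bar>s n - s (Suc n)\<bar> \<le> 1" using s01 by (auto dest!: spec) (metis empty_iff insert_iff s01 abs_0 abs_one diff_self diff_zero order_refl zero_le_one diff_0 abs_minus_cancel cancel_comm_monoid_add_class.diff_cancel)
    have ab: "a < b" using S by (cases "a < b") auto
    have sp: "(\<Sum>n\<in>{a..<b}. \<bar>s n - s (Suc n)\<bar>) = \<bar>s a - s (Suc a)\<bar> + (\<Sum>n\<in>{Suc a..<b}. \<bar>s n - s (Suc n)\<bar>)"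
      using ab by (simp add: sum.atLeast_Suc_lessThan)
    show "\<exists>m. a \<le> m \<and> s m = v \<and> (\<Sum>n\<in>{Suc m..<b}. \<bar>s n - s (Suc n)\<bar>) \<ge> real c"
    proof (cases "s a = v")
      case True
      then show ?thesis using sp S t1[of a] by (intro exI[of _ a]) auto
    next
      case F: False
      show ?thesis
      proof (cases "s (Suc a) = s a")
        case True
        then have "(\<Sum>n\<in>{Suc a..<b}. \<bar>s n - s (Suc n)\<bar>) \<ge> 2 + real c" using sp S by simp
        moreover have "b - Suc a \<le> d" using ba by simp
        ultimately obtain m where "Suc a \<le> m \<and> s m = v \<and> (\<Sum>n\<in>{Suc m..<b}. \<bar>s n - s (Suc n)\<bar>) \<ge> real c"
          using Suc.IH by blast
        then show ?thesis by (intro exI[of _ m]) auto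
      next
        case False
        have sv: "s (Suc a) = v" using F False s01[of a] s01[of "Suc a"] v by auto
        have ab2: "Suc a < b"
        proof (rule ccontr)
          assume "\<not> Suc a < b"
          then have "{Suc a..<b} = {}" by auto
          then show False using sp S t1[of a] by simp
        qed
        have sp2: "(\<Sum>n\<in>{Suc a..<b}. \<bar>s n - s (Suc n)\<bar>) = \<bar>s (Suc a) - s (Suc (Suc a))\<bar> + (\<Sum>n\<in>{Suc (Suc a)..<b}. \<bar>s n - s (Suc n)\<bar>)"
          using ab2 by (simp add: sum.atLeast_Suc_lessThan)
        show ?thesis using sv sp sp2 S t1[of a] t1[of "Suc a"] by (intro exI[of _ "Suc a"]) auto
      qed
    qed
  qed
qed

lemma pattern:
  fixes s :: "nat \<Rightarrow> real"
  assumes s01: "\<And>n. s n \<in> {0,1}"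
  shows "\<forall>a e. (\<forall>j. e j \<in> {0,1}) \<longrightarrow> (\<Sum>n\<in>{a..<b}. \<bar>s n - s (Suc n)\<bar>) \<ge> 2 * real N \<longrightarrow>
     (\<exists>i. (\<forall>j<N. a \<le> i j \<and> s (i j) = e j) \<and> (\<forall>j k. j < k \<longrightarrow> k < N \<longrightarrow> i j < i k))"
proof (induction N)
  case 0
  then show ?case by auto
next
  case (Suc N)
  show ?case
  proof (intro allI impI)
    fix a and e :: "nat \<Rightarrow> real"
    assume e: "\<forall>j. e j \<in> {0,1}" and S: "(\<Sum>n\<in>{a..<b}. \<bar>s n - s (Suc n)\<bar>) \<ge> 2 * real (Suc N)"
    have "\<exists>m. a \<le> m \<and> s m = e 0 \<and> (\<Sum>n\<in>{Suc m..<b}. \<bar>s n - s (Suc n)\<bar>) \<ge> real (2 * N)"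
      using find_pos[where s=s and v="e 0" and b=b and d="b - a" and c="2 * N"] s01 e S by auto
    then obtain m where m: "a \<le> m" "s m = e 0" "(\<Sum>n\<in>{Suc m..<b}. \<bar>s n - s (Suc n)\<bar>) \<ge> 2 * real N"
      by auto
    obtain i' where i': "\<forall>j<N. Suc m \<le> i' j \<and> s (i' j) = e (Suc j)"
      "\<forall>j k. j < k \<longrightarrow> k < N \<longrightarrow> i' j < i' k"
      using Suc.IH[rule_format, of "\<lambda>j. e (Suc j)" "Suc m"] e m(3) by auto
    define i where "i = (\<lambda>j. if j = 0 then m else i' (j - 1))"
    have A: "\<forall>j<Suc N. a \<le> i j \<and> s (i j) = e j"
    proof (intro allI impI)
      fix j assume "j < Suc N"
      then show "a \<le> i j \<and> s (i j) = e j" using i'(1)[rule_format, of "j - 1"] m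
        by (cases j) (auto simp: i_def)
    qed
    have B: "\<forall>j k. j < k \<longrightarrow> k < Suc N \<longrightarrow> i j < i k"
    proof (intro allI impI)
      fix j k assume "j < k" "k < Suc N"
      then show "i j < i k" using i'(1)[rule_format, of "k - 1"] i'(2)[rule_format, of "j - 1" "k - 1"]
        by (cases j; cases k) (auto simp: i_def)
    qed
    show "\<exists>i. (\<forall>j<Suc N. a \<le> i j \<and> s (i j) = e j) \<and> (\<forall>j k. j < k \<longrightarrow> k < Suc N \<longrightarrow> i j < i k)"
      using A B by blast
  qed
qed

lemma diff_le_var:
  fixes s :: "nat \<Rightarrow> real"
  assumes "a \<le> b"
  shows "\<bar>s a - s b\<bar> \<le> (\<Sum>n\<in>{a..<b}. \<bar>s n - s (Suc n)\<bar>)"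
  using assms
proof (induction b rule: dec_induct)
  case base
  then show ?case by simp
next
  case (step n)
  have "\<bar>s a - s (Suc n)\<bar> \<le> \<bar>s a - s n\<bar> + \<bar>s n - s (Suc n)\<bar>" by linarith
  then show ?case using step by (simp add: sum.atLeastLessThan_Suc)
qed

lemma chain_le:
  fixes p :: "nat \<Rightarrow> nat"
  shows "(\<forall>j<K. p j \<le> p (Suc j)) \<Longrightarrow> p 0 \<le> p K"
  by (induction K) (auto intro: le_trans)

lemma chain_var:
  fixes s :: "nat \<Rightarrow> real" and p :: "nat \<Rightarrow> nat"
  shows "(\<forall>j<K. p j \<le> p (Suc j)) \<Longrightarrow>
    (\<Sum>j<K. \<bar>s (p j) - s (p (Suc j))\<bar>) \<le> (\<Sum>n\<in>{p 0..<p K}. \<bar>s n - s (Suc n)\<bar>)"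
proof (induction K)
  case 0
  then show ?case by simp
next
  case (Suc K)
  have h: "\<forall>j<K. p j \<le> p (Suc j)" using Suc.prems by auto
  have pk: "p 0 \<le> p K" using chain_le[OF h] .
  have pk2: "p K \<le> p (Suc K)" using Suc.prems by auto
  have "(\<Sum>j<Suc K. \<bar>s (p j) - s (p (Suc j))\<bar>) = (\<Sum>j<K. \<bar>s (p j) - s (p (Suc j))\<bar>) + \<bar>s (p K) - s (p (Suc K))\<bar>"
    by simp
  also have "\<dots> \<le> (\<Sum>n\<in>{p 0..<p K}. \<bar>s n - s (Suc n)\<bar>) + (\<Sum>n\<in>{p K..<p (Suc K)}. \<bar>s n - s (Suc n)\<bar>)"
    using Suc.IH[OF h] diff_le_var[OF pk2, of s] by linarith
  also have "\<dots> = (\<Sum>n\<in>{p 0..<p (Suc K)}. \<bar>s n - s (Suc n)\<bar>)"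
    using sum.atLeastLessThan_concat[OF pk pk2] by simp
  finally show ?case .
qed

lemma lsc_series:
  assumes c: "continuous_map T euclideanreal c"
  and h: "\<And>n. continuous_map T euclideanreal (h n)"
  and pos: "\<And>n x. x \<in> topspace T \<Longrightarrow> 0 \<le> h n x"
  and sm: "\<And>x. x \<in> topspace T \<Longrightarrow> summable (\<lambda>n. h n x)"
  shows "lsc_on T (\<lambda>x. c x + (\<Sum>n. h n x))"
  unfolding lsc_on_def
proof
  fix r
  have eq: "{x \<in> topspace T. c x + (\<Sum>n. h n x) \<le> r} =
     (\<Inter>k\<in>UNIV. {x \<in> topspace T. c x + (\<Sum>n<k. h n x) \<in> {..r}})"
  proof (intro equalityI subsetI)
    fix x assume "x \<in> {x \<in> topspace T. c x + (\<Sum>n. h n x) \<le> r}"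
    then have x: "x \<in> topspace T" and le: "c x + (\<Sum>n. h n x) \<le> r" by auto
    have "\<And>k. (\<Sum>n<k. h n x) \<le> (\<Sum>n. h n x)"
      using sum_le_suminf[OF sm[OF x]] pos[OF x] by auto
    then show "x \<in> (\<Inter>k\<in>UNIV. {x \<in> topspace T. c x + (\<Sum>n<k. h n x) \<in> {..r}})"
      using x le by (auto intro: order_trans[rotated])
  next
    fix x assume "x \<in> (\<Inter>k\<in>UNIV. {x \<in> topspace T. c x + (\<Sum>n<k. h n x) \<in> {..r}})"
    then have x: "x \<in> topspace T" and le0: "\<forall>k. c x + (\<Sum>n<k. h n x) \<le> r" by auto
    have le: "\<And>k. (\<Sum>n<k. h n x) \<le> r - c x" using le0 by (metis add.commute le_diff_eq)
    have "(\<Sum>n. h n x) \<le> r - c x" by (rule suminf_le_const[OF sm[OF x] le])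
    then show "x \<in> {x \<in> topspace T. c x + (\<Sum>n. h n x) \<le> r}" using x by auto
  qed
  show "closedin T {x \<in> topspace T. c x + (\<Sum>n. h n x) \<le> r}"
    unfolding eq
    by (intro closedin_INT closedin_continuous_map_preimage[where Y=euclideanreal] continuous_map_add continuous_map_sum c h) auto
qed

lemma dir1:
  fixes X :: "'a set" and f :: "nat \<Rightarrow> 'a \<Rightarrow> real"
  assumes f01: "\<And>n x. n \<ge> 1 \<Longrightarrow> x \<in> X \<Longrightarrow> f n x \<in> {0, 1}"
  and N: "E \<subseteq> {1..N}"
  and emp: "\<forall>i :: nat \<Rightarrow> nat. (1 \<le> i 1 \<and> strict_mono_on {1..N} i) \<longrightarrow>
               {x \<in> X. (\<forall>j \<in> E. f (i j) x = 1) \<and> (\<forall>j \<in> {1..N} - E. f (i j) x = 0)} = {}"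
  and x: "x \<in> X"
  shows "summable (\<lambda>n. \<bar>f (Suc n) x - f (Suc (Suc n)) x\<bar>) \<and>
            (\<Sum>n. \<bar>f (Suc n) x - f (Suc (Suc n)) x\<bar>) \<le> real (2 * N)"
proof -
  define s where "s = (\<lambda>n. f (Suc n) x)"
  have s01: "\<And>n. s n \<in> {0,1}" using f01 x by (simp add: s_def)
  have bnd: "(\<Sum>n<b. \<bar>s n - s (Suc n)\<bar>) < 2 * real N" for b
  proof (rule ccontr)
    assume "\<not> ?thesis"
    then have S: "(\<Sum>n\<in>{0..<b}. \<bar>s n - s (Suc n)\<bar>) \<ge> 2 * real N" by (simp add: atLeast0LessThan)
    define e where "e = (\<lambda>j. if Suc j \<in> E then 1 else (0::real))"
    have "\<exists>i. (\<forall>j<N. 0 \<le> i j \<and> s (i j) = e j) \<and> (\<forall>j k. j < k \<longrightarrow> k < N \<longrightarrow> i j < i k)"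
    proof -
      have e01: "\<forall>j. e j \<in> {0,1}" by (simp add: e_def)
      show ?thesis using pattern[where s=s and b=b and N=N] s01 e01 S by blast
    qed
    then obtain i' where i': "\<forall>j<N. s (i' j) = e j" "\<forall>j k. j < k \<longrightarrow> k < N \<longrightarrow> i' j < i' k"
      by auto
    define i where "i = (\<lambda>j. Suc (i' (j - 1)))"
    have sm: "strict_mono_on {1..N} i"
      unfolding strict_mono_on_def i_def using i'(2) by auto
    have "x \<in> {x \<in> X. (\<forall>j \<in> E. f (i j) x = 1) \<and> (\<forall>j \<in> {1..N} - E. f (i j) x = 0)}"
    proof -
      have "\<forall>j \<in> E. f (i j) x = 1"
      proof
        fix j assume j: "j \<in> E"
        then have "j \<in> {1..N}" using N by auto
        then show "f (i j) x = 1" using i'(1)[rule_format, of "j - 1"] j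
          by (auto simp: i_def s_def e_def)
      qed
      moreover have "\<forall>j \<in> {1..N} - E. f (i j) x = 0"
      proof
        fix j assume j: "j \<in> {1..N} - E"
        then show "f (i j) x = 0" using i'(1)[rule_format, of "j - 1"] j
          by (auto simp: i_def s_def e_def)
      qed
      ultimately show ?thesis using x by auto
    qed
    then show False using emp[rule_format, of i] sm by (auto simp: i_def)
  qed
  have pos: "\<And>n. 0 \<le> \<bar>s n - s (Suc n)\<bar>" by simp
  have su: "summable (\<lambda>n. \<bar>s n - s (Suc n)\<bar>)"
    by (rule summableI_nonneg_bounded[OF pos, of _ "2 * real N"]) (use bnd in \<open>auto intro: less_imp_le\<close>)
  moreover have "(\<Sum>n. \<bar>s n - s (Suc n)\<bar>) \<le> real (2 * N)"
    using suminf_le_const[OF su, of "2 * real N"] bnd less_imp_le by auto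
  ultimately show ?thesis by (simp add: s_def)
qed

lemma dir2:
  fixes X :: "'a set" and f :: "nat \<Rightarrow> 'a \<Rightarrow> real"
  assumes f01: "\<And>n x. n \<ge> 1 \<Longrightarrow> x \<in> X \<Longrightarrow> f n x \<in> {0, 1}"
  and M: "\<forall>x \<in> X. summable (\<lambda>n. \<bar>f (Suc n) x - f (Suc (Suc n)) x\<bar>) \<and>
            (\<Sum>n. \<bar>f (Suc n) x - f (Suc (Suc n)) x\<bar>) \<le> real M"
  and i1: "1 \<le> i 1" and sm: "strict_mono_on {1..M+2} i"
  shows "{x \<in> X. (\<forall>j \<in> {j\<in>{1..M+2}. odd j}. f (i j) x = 1) \<and>
           (\<forall>j \<in> {1..M+2} - {j\<in>{1..M+2}. odd j}. f (i j) x = 0)} = {}"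
proof (rule ccontr)
  assume "\<not> ?thesis"
  then obtain x where x: "x \<in> X" and o1: "\<forall>j \<in> {j\<in>{1..M+2}. odd j}. f (i j) x = 1"
    and o0: "\<forall>j \<in> {1..M+2} - {j\<in>{1..M+2}. odd j}. f (i j) x = 0" by blast
  define s where "s = (\<lambda>n. f (Suc n) x)"
  define p where "p = (\<lambda>j. i (Suc j) - 1)"
  have imono: "\<And>a b. a \<in> {1..M+2} \<Longrightarrow> b \<in> {1..M+2} \<Longrightarrow> a < b \<Longrightarrow> i a < i b"
    using sm unfolding strict_mono_on_def by blast
  have ige: "\<And>j. j \<in> {1..M+2} \<Longrightarrow> 1 \<le> i j"
  proof -
    fix j assume j: "j \<in> {1..M+2}"
    show "1 \<le> i j"
    proof (cases "j = 1")
      case True then show ?thesis using i1 by simp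
    next
      case False then show ?thesis using imono[of 1 j] j i1 by auto
    qed
  qed
  have sp: "s (p j) = f (i (Suc j)) x" if j: "j < M + 2" for j
  proof -
    have "1 \<le> i (Suc j)" using ige[of "Suc j"] j by auto
    then show ?thesis by (simp add: s_def p_def)
  qed
  have ch: "\<forall>j<M+1. p j \<le> p (Suc j)"
  proof (intro allI impI)
    fix j assume "j < M+1"
    then have "i (Suc j) < i (Suc (Suc j))" using imono[of "Suc j" "Suc (Suc j)"] by auto
    then show "p j \<le> p (Suc j)" by (simp add: p_def)
  qed
  have su: "summable (\<lambda>n. \<bar>s n - s (Suc n)\<bar>)" and sle: "(\<Sum>n. \<bar>s n - s (Suc n)\<bar>) \<le> real M"
    using M x by (auto simp: s_def)
  have "(\<Sum>j<M+1. \<bar>s (p j) - s (p (Suc j))\<bar>) \<le> (\<Sum>n\<in>{p 0..<p (M+1)}. \<bar>s n - s (Suc n)\<bar>)"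
    by (rule chain_var[OF ch])
  also have "\<dots> \<le> (\<Sum>n. \<bar>s n - s (Suc n)\<bar>)"
    by (rule sum_le_suminf[OF su]) auto
  also have "\<dots> \<le> real M" by (rule sle)
  finally have le: "(\<Sum>j<M+1. \<bar>s (p j) - s (p (Suc j))\<bar>) \<le> real M" .
  have one: "\<bar>s (p j) - s (p (Suc j))\<bar> = 1" if j: "j < M + 1" for j
  proof -
    have a: "s (p j) = f (i (Suc j)) x" "s (p (Suc j)) = f (i (Suc (Suc j))) x" using sp j by auto
    show ?thesis
    proof (cases "odd (Suc j)")
      case True
      then show ?thesis using a o1 o0 j by auto
    next
      case False
      then show ?thesis using a o1 o0 j by auto
    qed
  qed
  have "(\<Sum>j<M+1. \<bar>s (p j) - s (p (Suc j))\<bar>) = real (M + 1)"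
    using one by simp
  then show False using le by simp
qed

theorem lemma2p8:
  fixes X :: "'a set" and f :: "nat \<Rightarrow> 'a \<Rightarrow> real"
  assumes f01: "\<And>n x. n \<ge> 1 \<Longrightarrow> x \<in> X \<Longrightarrow> f n x \<in> {0, 1}"
  shows "((\<exists>(N::nat) E. E \<subseteq> {1..N} \<and>
            (\<forall>i :: nat \<Rightarrow> nat. (1 \<le> i 1 \<and> strict_mono_on {1..N} i) \<longrightarrow>
               {x \<in> X. (\<forall>j \<in> E. f (i j) x = 1) \<and> (\<forall>j \<in> {1..N} - E. f (i j) x = 0)} = {}))
         \<longleftrightarrow>
         (\<exists>M::nat. \<forall>x \<in> X. summable (\<lambda>n. \<bar>f (Suc n) x - f (Suc (Suc n)) x\<bar>) \<and>
            (\<Sum>n. \<bar>f (Suc n) x - f (Suc (Suc n)) x\<bar>) \<le> real M))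
       \<and>
       (\<forall>d. (Metric_space X d \<and> compact_space (Metric_space.mtopology X d) \<and>
             (\<forall>n \<ge> 1. continuous_map (Metric_space.mtopology X d) euclideanreal (f n)) \<and>
             (\<exists>M::nat. \<forall>x \<in> X. summable (\<lambda>n. \<bar>f (Suc n) x - f (Suc (Suc n)) x\<bar>) \<and>
               (\<Sum>n. \<bar>f (Suc n) x - f (Suc (Suc n)) x\<bar>) \<le> real M))
          \<longrightarrow> (\<exists>g. (\<forall>x \<in> X. (\<lambda>n. f n x) \<longlonglongrightarrow> g x) \<and>
                    DBSC (Metric_space.mtopology X d) g))"
proof -
  have P1: "(\<exists>(N::nat) E. E \<subseteq> {1..N} \<and>
            (\<forall>i :: nat \<Rightarrow> nat. (1 \<le> i 1 \<and> strict_mono_on {1..N} i) \<longrightarrow>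
               {x \<in> X. (\<forall>j \<in> E. f (i j) x = 1) \<and> (\<forall>j \<in> {1..N} - E. f (i j) x = 0)} = {}))
         \<longleftrightarrow>
         (\<exists>M::nat. \<forall>x \<in> X. summable (\<lambda>n. \<bar>f (Suc n) x - f (Suc (Suc n)) x\<bar>) \<and>
            (\<Sum>n. \<bar>f (Suc n) x - f (Suc (Suc n)) x\<bar>) \<le> real M)" (is "?L \<longleftrightarrow> ?R")
  proof
    assume ?L
    then obtain N E where NE: "E \<subseteq> {1..N}" and emp: "\<forall>i :: nat \<Rightarrow> nat. (1 \<le> i 1 \<and> strict_mono_on {1..N} i) \<longrightarrow>
               {x \<in> X. (\<forall>j \<in> E. f (i j) x = 1) \<and> (\<forall>j \<in> {1..N} - E. f (i j) x = 0)} = {}"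
      by blast
    show ?R using dir1[OF f01 NE emp] by (intro exI[of _ "2 * N"]) blast
  next
    assume ?R
    then obtain M where M: "\<forall>x \<in> X. summable (\<lambda>n. \<bar>f (Suc n) x - f (Suc (Suc n)) x\<bar>) \<and>
            (\<Sum>n. \<bar>f (Suc n) x - f (Suc (Suc n)) x\<bar>) \<le> real M" by blast
    show ?L
      apply (rule exI[of _ "M + 2"], rule exI[of _ "{j\<in>{1..M+2}. odd j}"])
      using dir2[OF f01 M] by auto
  qed
  have P2: "\<forall>d. (Metric_space X d \<and> compact_space (Metric_space.mtopology X d) \<and>
             (\<forall>n \<ge> 1. continuous_map (Metric_space.mtopology X d) euclideanreal (f n)) \<and>
             (\<exists>M::nat. \<forall>x \<in> X. summable (\<lambda>n. \<bar>f (Suc n) x - f (Suc (Suc n)) x\<bar>) \<and>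
               (\<Sum>n. \<bar>f (Suc n) x - f (Suc (Suc n)) x\<bar>) \<le> real M))
          \<longrightarrow> (\<exists>g. (\<forall>x \<in> X. (\<lambda>n. f n x) \<longlonglongrightarrow> g x) \<and>
                    DBSC (Metric_space.mtopology X d) g)"
  proof (intro allI impI)
    fix d
    assume H: "Metric_space X d \<and> compact_space (Metric_space.mtopology X d) \<and>
             (\<forall>n \<ge> 1. continuous_map (Metric_space.mtopology X d) euclideanreal (f n)) \<and>
             (\<exists>M::nat. \<forall>x \<in> X. summable (\<lambda>n. \<bar>f (Suc n) x - f (Suc (Suc n)) x\<bar>) \<and>
               (\<Sum>n. \<bar>f (Suc n) x - f (Suc (Suc n)) x\<bar>) \<le> real M)"
    define T where "T = Metric_space.mtopology X d"
    have ms: "Metric_space X d" using H by blast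
    have cont: "\<And>n. n \<ge> 1 \<Longrightarrow> continuous_map T euclideanreal (f n)" using H by (simp add: T_def)
    obtain M :: nat where M: "\<forall>x \<in> X. summable (\<lambda>n. \<bar>f (Suc n) x - f (Suc (Suc n)) x\<bar>) \<and>
               (\<Sum>n. \<bar>f (Suc n) x - f (Suc (Suc n)) x\<bar>) \<le> real M" using H by blast
    have tsp: "topspace T = X" using Metric_space.topspace_mtopology[OF ms] by (simp add: T_def)
    define D where "D = (\<lambda>n x. f (Suc (Suc n)) x - f (Suc n) x)"
    define P where "P = (\<lambda>n x. max 0 (D n x))"
    define Q where "Q = (\<lambda>n x. max 0 (- D n x))"
    define g where "g = (\<lambda>x. f 1 x + (\<Sum>n. D n x))"
    have absD: "\<And>n x. \<bar>D n x\<bar> = \<bar>f (Suc n) x - f (Suc (Suc n)) x\<bar>" by (simp add: D_def abs_minus_commute)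
    have smD: "summable (\<lambda>n. \<bar>D n x\<bar>)" and leD: "(\<Sum>n. \<bar>D n x\<bar>) \<le> real M" if "x \<in> X" for x
      using M that by (simp_all add: absD)
    have smP: "summable (\<lambda>n. P n x)" if "x \<in> X" for x
      by (rule summable_comparison_test'[OF smD[OF that], of 0]) (auto simp: P_def)
    have smQ: "summable (\<lambda>n. Q n x)" if "x \<in> X" for x
      by (rule summable_comparison_test'[OF smD[OF that], of 0]) (auto simp: Q_def)
    have conv: "(\<lambda>n. f n x) \<longlonglongrightarrow> g x" if x: "x \<in> X" for x
    proof -
      have "summable (\<lambda>n. D n x)" by (rule summable_rabs_cancel[OF smD[OF x]])
      then have "(\<lambda>n. \<Sum>k<n. D k x) \<longlonglongrightarrow> (\<Sum>n. D n x)" by (rule summable_LIMSEQ)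
      then have "(\<lambda>n. f 1 x + (\<Sum>k<n. D k x)) \<longlonglongrightarrow> g x" unfolding g_def
        by (intro tendsto_add tendsto_const)
      moreover have "\<And>n. f 1 x + (\<Sum>k<n. D k x) = f (Suc n) x"
        using sum_lessThan_telescope[of "\<lambda>m. f (Suc m) x"] by (simp add: D_def)
      ultimately have "(\<lambda>n. f (Suc n) x) \<longlonglongrightarrow> g x" by simp
      then show ?thesis by (rule LIMSEQ_imp_Suc)
    qed
    define F1 where "F1 = (\<lambda>x. f 1 x + (\<Sum>n. P n x))"
    define F2 where "F2 = (\<lambda>x. (\<lambda>x. 0) x + (\<Sum>n. Q n x))"
    have cP: "continuous_map T euclideanreal (P n)" for n
    proof -
      have "continuous_map T euclideanreal (\<lambda>x. max 0 (f (Suc (Suc n)) x - f (Suc n) x))"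
        by (intro continuous_map_real_max continuous_map_diff cont continuous_map_const[THEN iffD2]) auto
      then show ?thesis by (simp add: P_def D_def)
    qed
    have cQ: "continuous_map T euclideanreal (Q n)" for n
    proof -
      have "continuous_map T euclideanreal (\<lambda>x. max 0 (- (f (Suc (Suc n)) x - f (Suc n) x)))"
        by (intro continuous_map_real_max continuous_map_minus continuous_map_diff cont continuous_map_const[THEN iffD2]) auto
      then show ?thesis by (simp add: Q_def D_def)
    qed
    have l1: "lsc_on T F1" unfolding F1_def
      by (rule lsc_series) (auto simp: tsp intro: cont cP smP simp del: max.bounded_iff, simp add: P_def)
    have l2: "lsc_on T F2" unfolding F2_def
      by (rule lsc_series) (auto simp: tsp intro: cQ smQ continuous_map_const[THEN iffD2] simp del: max.bounded_iff, simp add: Q_def)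
    have b1: "bounded_on T F1" unfolding bounded_on_def
    proof (intro exI[of _ "1 + real M"] ballI)
      fix x assume "x \<in> topspace T"
      then have x: "x \<in> X" using tsp by simp
      have "0 \<le> (\<Sum>n. P n x)" by (rule suminf_nonneg[OF smP[OF x]]) (simp add: P_def)
      moreover have "(\<Sum>n. P n x) \<le> (\<Sum>n. \<bar>D n x\<bar>)"
        by (rule suminf_le[OF _ smP[OF x] smD[OF x]]) (simp add: P_def)
      moreover have "f 1 x \<in> {0,1}" using f01 x by simp
      ultimately show "\<bar>F1 x\<bar> \<le> 1 + real M" using leD[OF x] by (auto simp: F1_def)
    qed
    have b2: "bounded_on T F2" unfolding bounded_on_def
    proof (intro exI[of _ "real M"] ballI)
      fix x assume "x \<in> topspace T"
      then have x: "x \<in> X" using tsp by simp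
      have "0 \<le> (\<Sum>n. Q n x)" by (rule suminf_nonneg[OF smQ[OF x]]) (simp add: Q_def)
      moreover have "(\<Sum>n. Q n x) \<le> (\<Sum>n. \<bar>D n x\<bar>)"
        by (rule suminf_le[OF _ smQ[OF x] smD[OF x]]) (simp add: Q_def)
      ultimately show "\<bar>F2 x\<bar> \<le> real M" using leD[OF x] by (auto simp: F2_def)
    qed
    have eq: "\<forall>x \<in> topspace T. g x = F1 x - F2 x"
    proof
      fix x assume "x \<in> topspace T"
      then have x: "x \<in> X" using tsp by simp
      have "(\<Sum>n. P n x) - (\<Sum>n. Q n x) = (\<Sum>n. P n x - Q n x)" by (rule suminf_diff[OF smP[OF x] smQ[OF x]])
      also have "(\<lambda>n. P n x - Q n x) = (\<lambda>n. D n x)" by (auto simp: P_def Q_def max_def)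
      finally show "g x = F1 x - F2 x" by (simp add: g_def F1_def F2_def)
    qed
    have "DBSC T g" unfolding DBSC_def semicont_on_def
      using l1 l2 b1 b2 eq by blast
    then show "\<exists>g. (\<forall>x \<in> X. (\<lambda>n. f n x) \<longlonglongrightarrow> g x) \<and> DBSC (Metric_space.mtopology X d) g"
      using conv unfolding T_def by blast
  qed
  show ?thesis using P1 P2 by blast
qed

end
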